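(* Let $\Bbbk$ be a field and $q\in\Bbbk$ with $[m]_q:=1+q+\cdots+q^{m-1}\ne0$ for all $m\ge1$, and $[m]_q!=[1]_q\cdots[m]_q$. Then for all $k\ge1$, $$\det \begin{pmatrix} 1&\frac{t}{[1]_q!}&\frac{t^2}{[2]_q!}&\ldots &\frac{t^k}{[k]_q!}\\ 1&\frac{1}{[1]_q!}&\frac{1}{[2]_q!}&\ldots &\frac{1}{[k]_q!}\\ 0&1&\frac{1}{[1]_q!}&\ldots &\frac{1}{[k-1]_q!}\\ \vdots&\vdots&\ddots&\ddots&\vdots \\ 0&0&\ldots &1&\frac{1}{[1]_q!} \end{pmatrix} =\frac{(1-t)(q-t)\cdots (q^{k-1}-t)}{[k]_q!}.$$
   Context: The matrix is $(k+1)\times(k+1)$; row $r\ge3$ has zeros in its first $r-2$ entries, $1$ in entry $r-1$, followed by $1/[1]_q!,1/[2]_q!,\dots$. *)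

theory Defs
  imports Main "Jordan_Normal_Form.Determinant"
begin

definition qint :: "'a::field \<Rightarrow> nat \<Rightarrow> 'a" where
  "qint q m = (\<Sum>i<m. q ^ i)"

definition qfact :: "'a::field \<Rightarrow> nat \<Rightarrow> 'a" where
  "qfact q m = (\<Prod>i\<in>{1..m}. qint q i)"

definition cor_mat :: "'a::field \<Rightarrow> 'a \<Rightarrow> nat \<Rightarrow> 'a mat" where
  "cor_mat q t k = mat (k+1) (k+1) (\<lambda>(i,j).
     if i = 0 then t ^ j / qfact q j
     else if i - 1 \<le> j then 1 / qfact q (j + 1 - i) else 0)"

end

theory Submission
  imports Defs
begin

definition gm :: "(nat \<Rightarrow> 'a::field) \<Rightarrow> (nat \<Rightarrow> 'a) \<Rightarrow> nat \<Rightarrow> 'a mat" where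
  "gm a e k = mat (k+1) (k+1) (\<lambda>(i,j).
     if i = 0 then a j else if i - 1 \<le> j then e (j + 1 - i) else 0)"

lemma gm_del00: "mat_delete (gm a e (Suc k)) 0 0 = gm (\<lambda>j. e (Suc j)) e k"
  unfolding gm_def mat_delete_def
  by (rule eq_matI) (auto simp: Suc_diff_le)

lemma gm_del10: "mat_delete (gm a e (Suc k)) (Suc 0) 0 = gm (\<lambda>j. a (Suc j)) e k"
  unfolding gm_def mat_delete_def
  by (rule eq_matI) (auto simp: Suc_diff_le)

lemma gm_det0: "det (gm a e 0) = a 0"
proof -
  have "det (gm a e 0) = (\<Sum>i<1. gm a e 0 $$ (i,0) * cofactor (gm a e 0) i 0)"
    by (rule laplace_expansion_column) (auto simp: gm_def)
  also have "\<dots> = a 0" unfolding cofactor_def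
    by (simp add: gm_def mat_delete_def)
  finally show ?thesis .
qed

lemma gm_detSuc: "det (gm a e (Suc k)) = a 0 * det (gm (\<lambda>j. e (Suc j)) e k) - e 0 * det (gm (\<lambda>j. a (Suc j)) e k)"
proof -
  have "det (gm a e (Suc k)) = (\<Sum>i<Suc (Suc k). gm a e (Suc k) $$ (i,0) * cofactor (gm a e (Suc k)) i 0)"
    by (rule laplace_expansion_column) (auto simp: gm_def)
  also have "\<dots> = (\<Sum>i<2. gm a e (Suc k) $$ (i,0) * cofactor (gm a e (Suc k)) i 0)"
    by (rule sum.mono_neutral_right) (auto simp: gm_def)
  also have "\<dots> = a 0 * det (gm (\<lambda>j. e (Suc j)) e k) - e 0 * det (gm (\<lambda>j. a (Suc j)) e k)"
  proof -
    have "gm a e (Suc k) $$ (0,0) = a 0" "gm a e (Suc k) $$ (Suc 0,0) = e 0" by (auto simp: gm_def)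
    then show ?thesis by (simp add: numeral_2_eq_2 cofactor_def gm_del00 gm_del10)
  qed
  finally show ?thesis .
qed

definition HH :: "(nat \<Rightarrow> 'a::field) \<Rightarrow> nat \<Rightarrow> 'a" where
  "HH e n = (if n = 0 then 1 else det (gm (\<lambda>j. e (Suc j)) e (n - 1)))"

lemma gm_det_sum:
  assumes "e 0 = 1"
  shows "det (gm a e k) = (\<Sum>j\<le>k. (-1)^j * a j * HH e (k - j))"
proof (induction k arbitrary: a)
  case 0
  then show ?case by (simp add: gm_det0 HH_def)
next
  case (Suc k)
  have "det (gm a e (Suc k)) = a 0 * HH e (Suc k) - (\<Sum>j\<le>k. (-1)^j * a (Suc j) * HH e (k - j))"
    unfolding gm_detSuc Suc[of "\<lambda>j. a (Suc j)"] assms by (simp add: HH_def)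
  then show ?case
    unfolding sum.atMost_Suc_shift
    by (simp add: sum_negf)
qed

lemma HH_rec:
  assumes "e 0 = 1"
  shows "HH e (Suc n) = (\<Sum>j\<le>n. (-1)^j * e (Suc j) * HH e (n - j))"
  using gm_det_sum[where e=e and a="\<lambda>j. e (Suc j)" and k=n, OF assms] by (simp add: HH_def)

lemma qfact_0[simp]: "qfact q 0 = 1" by (simp add: qfact_def)
lemma qfact_Suc: "qfact q (Suc n) = qfact q n * qint q (Suc n)"
  by (simp add: qfact_def prod.nat_ivl_Suc')
lemma qint_0[simp]: "qint q 0 = 0" by (simp add: qint_def)
lemma qint_add: "qint q (j + m) = qint q j + q^j * qint q m"
  by (induction m) (auto simp: qint_def algebra_simps power_add)

definition tri :: "nat \<Rightarrow> nat" where "tri n = n * (n - 1) div 2"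
lemma tri_Suc: "tri (Suc n) = tri n + n"
  unfolding tri_def by (cases n) (auto simp: algebra_simps)

lemma qfact_nz: assumes "\<And>m. m \<ge> 1 \<Longrightarrow> qint q m \<noteq> 0" shows "qfact q n \<noteq> 0"
  using assms by (induction n) (auto simp: qfact_Suc)

definition fterm :: "'a::field \<Rightarrow> 'a \<Rightarrow> nat \<Rightarrow> nat \<Rightarrow> 'a" where
  "fterm q t k j = (-1)^j * t^j * q^(tri (k-j)) / (qfact q j * qfact q (k-j))"

definition SS :: "'a::field \<Rightarrow> 'a \<Rightarrow> nat \<Rightarrow> 'a" where
  "SS q t k = (\<Sum>j\<le>k. fterm q t k j)"

context
  fixes q :: "'a::field"
  assumes nz: "\<And>m. m \<ge> 1 \<Longrightarrow> qint q m \<noteq> 0"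
begin

lemma T1: assumes "j \<le> k"
  shows "q^j * qint q (Suc k - j) * fterm q t (Suc k) j = q^k * fterm q t k j"
proof -
  obtain m where k: "k = j + m" using assms le_Suc_ex by blast
  have e: "Suc k - j = Suc m" "k - j = m" using k by auto
  have n1: "qfact q j \<noteq> 0" "qfact q m \<noteq> 0" "qint q (Suc m) \<noteq> 0" using nz qfact_nz by auto
  show ?thesis unfolding fterm_def e qfact_Suc tri_Suc using n1
    by (simp add: k power_add field_simps)
qed

lemma T2: "qint q (Suc i) * fterm q t (Suc k) (Suc i) = - t * fterm q t k i"
proof -
  have n1: "qfact q i \<noteq> 0" "qfact q (k-i) \<noteq> 0" "qint q (Suc i) \<noteq> 0" using nz qfact_nz by auto
  show ?thesis unfolding fterm_def qfact_Suc using n1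
    by (simp add: field_simps)
qed

lemma T3: assumes "j \<le> Suc k" shows "qint q (Suc k) = q^j * qint q (Suc k - j) + qint q j"
  using qint_add[of q j "Suc k - j"] assms by simp

lemma SS_rec: "qint q (Suc k) * SS q t (Suc k) = (q^k - t) * SS q t k"
proof -
  have "qint q (Suc k) * SS q t (Suc k) = (\<Sum>j\<le>Suc k. q^j * qint q (Suc k - j) * fterm q t (Suc k) j)
       + (\<Sum>j\<le>Suc k. qint q j * fterm q t (Suc k) j)"
    unfolding SS_def sum_distrib_left sum.distrib[symmetric]
  proof (rule sum.cong)
    fix x assume "x \<in> {..Suc k}"
    then have "qint q (Suc k) = q^x * qint q (Suc k - x) + qint q x" by (intro T3) auto
    then show "qint q (Suc k) * fterm q t (Suc k) x = q ^ x * qint q (Suc k - x) * fterm q t (Suc k) x + qint q x * fterm q t (Suc k) x"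
      by (simp add: algebra_simps)
  qed simp
  also have "(\<Sum>j\<le>Suc k. q^j * qint q (Suc k - j) * fterm q t (Suc k) j) = q^k * SS q t k"
    unfolding SS_def sum_distrib_left by (simp add: T1)
  also have "(\<Sum>j\<le>Suc k. qint q j * fterm q t (Suc k) j) = - t * SS q t k"
    unfolding SS_def sum_distrib_left sum.atMost_Suc_shift by (simp add: T2)
  finally show ?thesis by (simp add: algebra_simps)
qed

lemma SS_closed: "qfact q k * SS q t k = (\<Prod>i<k. q^i - t)"
proof (induction k)
  case 0
  then show ?case by (simp add: SS_def fterm_def tri_def)
next
  case (Suc k)
  have "qfact q (Suc k) * SS q t (Suc k) = qfact q k * (qint q (Suc k) * SS q t (Suc k))"
    by (simp add: qfact_Suc)
  also have "\<dots> = (q^k - t) * (qfact q k * SS q t k)" by (simp add: SS_rec)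
  finally show ?case using Suc by simp
qed

lemma hh_rec: "q^(tri (Suc n)) / qfact q (Suc n) =
   (\<Sum>j\<le>n. (-1)^j * (1 / qfact q (Suc j)) * (q^(tri (n-j)) / qfact q (n-j)))"
proof -
  have "qfact q (Suc n) * SS q 1 (Suc n) = 0"
    unfolding SS_closed by (rule prod_zero) (auto intro!: bexI[of _ 0])
  then have "SS q 1 (Suc n) = 0" using qfact_nz[OF nz] by simp
  moreover have "SS q 1 (Suc n) = q^(tri (Suc n)) / qfact q (Suc n) -
     (\<Sum>j\<le>n. (-1)^j * (1 / qfact q (Suc j)) * (q^(tri (n-j)) / qfact q (n-j)))"
    unfolding SS_def sum.atMost_Suc_shift
    by (simp add: fterm_def sum_negf[symmetric])
  ultimately show ?thesis by simp
qed

lemma HH_eq: "HH (\<lambda>n. 1 / qfact q n) n = q^(tri n) / qfact q n"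
proof (induction n rule: less_induct)
  case (less n)
  show ?case
  proof (cases n)
    case 0
    then show ?thesis by (simp add: HH_def tri_def)
  next
    case (Suc m)
    have "HH (\<lambda>n. 1 / qfact q n) n = (\<Sum>j\<le>m. (-1)^j * (1 / qfact q (Suc j)) * HH (\<lambda>n. 1 / qfact q n) (m - j))"
      unfolding Suc by (rule HH_rec) simp
    also have "\<dots> = (\<Sum>j\<le>m. (-1)^j * (1 / qfact q (Suc j)) * (q^(tri (m-j)) / qfact q (m-j)))"
      by (rule sum.cong) (auto simp: less Suc)
    also have "\<dots> = q^(tri n) / qfact q n" unfolding Suc by (rule hh_rec[symmetric])
    finally show ?thesis .
  qed
qed

end

theorem corollary2p5:
  fixes q t :: "'a::field" and k :: nat
  assumes "\<And>m. m \<ge> 1 \<Longrightarrow> qint q m \<noteq> 0"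
    and "k \<ge> 1"
  shows "det (cor_mat q t k) = (\<Prod>i<k. q ^ i - t) / qfact q k"
proof -
  have m: "cor_mat q t k = gm (\<lambda>j. t^j / qfact q j) (\<lambda>n. 1 / qfact q n) k"
    unfolding cor_mat_def gm_def by simp
  have "det (cor_mat q t k) = (\<Sum>j\<le>k. (-1)^j * (t^j / qfact q j) * HH (\<lambda>n. 1 / qfact q n) (k - j))"
    unfolding m by (rule gm_det_sum) simp
  also have "\<dots> = SS q t k"
    unfolding SS_def by (rule sum.cong) (auto simp: fterm_def HH_eq[OF assms(1)])
  also have "\<dots> = (\<Prod>i<k. q ^ i - t) / qfact q k"
    using SS_closed[OF assms(1), of k t] qfact_nz[OF assms(1), of k]
    by (simp add: field_simps)
  finally show ?thesis .
qed

end
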